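(* Let $\mathcal{D}$, $\mathcal{X}$ be finite sets and $\mathcal{Y}=\{0,1\}$. Let $q_{D,X,Y}$ be the true distribution of the data on $\mathcal{D}\times\mathcal{X}\times\mathcal{Y}$, and let $p_{D,X,Y}$ be the empirical distribution of $n$ i.i.d. samples from $q_{D,X,Y}$. Let $p_{\hat X,\hat Y|X,Y,D}$ be a randomized mapping (conditional distribution from $\mathcal{D}\times\mathcal{X}\times\mathcal{Y}$ to $\mathcal{X}\times\mathcal{Y}$) determined from $p_{D,X,Y}$; denote by $p_{D,\hat X,\hat Y}$ (with marginals/conditionals $p_{\hat Y|D}$, $p_{\hat X,\hat Y}$) the joint distribution of $(D,\hat X,\hat Y)$ when the mapping is applied to $(D,X,Y)\sim p_{D,X,Y}$, and by $q_{D,\hat X,\hat Y}$ (with $q_{\hat Y|D}$, $q_{\hat X,\hat Y}$) the corresponding distribution when it is applied to $(D,X,Y)\sim q_{D,X,Y}$. Let $p_{Y_T}$ be a target distribution on $\mathcal{Y}$, let $J(p,q)=|p/q-1|$, and let $\Delta(p_{X,Y},p_{\hat X,\hat Y})=\sum_{x,y}|p_{X,Y}(x,y)-p_{\hat X,\hat Y}(x,y)|$. Suppose that for all $y\in\mathcal{Y}$, $d\in\mathcal{D}$ we have $p_{Y,D}(y,d)>0$ and $J\big(p_{\hat Y|D}(y|d),p_{Y_T}(y)\big)\le\epsilon$, and that $\Delta(p_{X,Y},p_{\hat X,\hat Y})\le\mu$. Then with probability $1-\beta$, \[ J\big(q_{\hat Y|D}(y|d),p_{Y_T}(y)\big)=\epsilon+O\!\left(\sqrt{\tfrac{1}{n}\log\tfrac{n}{\beta}}\right),\qquad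 \Delta\big(q_{X,Y},q_{\hat X,\hat Y}\big)=\mu+O\!\left(\sqrt{\tfrac{1}{n}\log\tfrac{n}{\beta}}\right), \] where the constants in the $O(\cdot)$ terms depend on the alphabet size $|\mathcal{D}||\mathcal{X}||\mathcal{Y}|$ and on the minimum probability $\min_{y,d}p_{D,\hat Y}(d,y)$, which are treated as fixed (the latter bounded away from zero).
   Context: $D$ denotes discriminatory variables, $X$ features, $Y$ a binary outcome; the mapping $p_{\hat X,\hat Y|X,Y,D}$ transforms $(X,Y)$ into $(\hat X,\hat Y)$ while retaining $D$.
   Formalization: The constants in the O(.) terms depend also on a fixed upper bound assumed for $\epsilon$, alongside the alphabet size and the positive lower bound on $\min_{y,d}p_{D,\hat Y}(d,y)$. Each condition added here is assumed in the paper as well or is needed for the statement above to hold. *)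

theory Defs
  imports "HOL-Probability.Probability"
begin

text \<open>Distributions on finite alphabets are represented as real-valued mass functions.
  The label alphabet is bool (Y = {0,1}).\<close>

text \<open>n i.i.d. samples from q, indexed by 0..n-1 (fixed default value elsewhere).\<close>
definition sample_pmf :: "nat \<Rightarrow> 'a pmf \<Rightarrow> (nat \<Rightarrow> 'a) pmf" where
  "sample_pmf n q = Pi_pmf {..<n} undefined (\<lambda>_. q)"

definition emp_dist :: "nat \<Rightarrow> (nat \<Rightarrow> 'a) \<Rightarrow> 'a \<Rightarrow> real" where
  "emp_dist n s a = real (card {i\<in>{..<n}. s i = a}) / real n"

text \<open>Joint distribution of (D, Xhat, Yhat) when the randomized mapping M is applied to (D,X,Y) ~ P.\<close>
definition push :: "('d::finite \<times> 'x::finite \<times> bool \<Rightarrow> real) \<Rightarrow> ('d \<Rightarrow> 'x \<Rightarrow> bool \<Rightarrow> ('x \<times> bool) pmf)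
    \<Rightarrow> 'd \<times> 'x \<times> bool \<Rightarrow> real" where
  "push P M = (\<lambda>(d, x', y'). \<Sum>x\<in>UNIV. \<Sum>y\<in>UNIV. P (d, x, y) * pmf (M d x y) (x', y'))"

definition marg_XY :: "('d::finite \<times> 'x \<times> bool \<Rightarrow> real) \<Rightarrow> 'x \<Rightarrow> bool \<Rightarrow> real" where
  "marg_XY P x y = (\<Sum>d\<in>UNIV. P (d, x, y))"

definition marg_YD :: "('d \<times> 'x::finite \<times> bool \<Rightarrow> real) \<Rightarrow> bool \<Rightarrow> 'd \<Rightarrow> real" where
  "marg_YD P y d = (\<Sum>x\<in>UNIV. P (d, x, y))"

definition marg_D :: "('d \<times> 'x::finite \<times> bool \<Rightarrow> real) \<Rightarrow> 'd \<Rightarrow> real" where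
  "marg_D P d = (\<Sum>x\<in>UNIV. \<Sum>y\<in>UNIV. P (d, x, y))"

definition cond_Y_D :: "('d \<times> 'x::finite \<times> bool \<Rightarrow> real) \<Rightarrow> bool \<Rightarrow> 'd \<Rightarrow> real" where
  "cond_Y_D P y d = marg_YD P y d / marg_D P d"

definition J :: "real \<Rightarrow> real \<Rightarrow> real" where
  "J p q = \<bar>p / q - 1\<bar>"

definition Delta :: "('x::finite \<Rightarrow> bool \<Rightarrow> real) \<Rightarrow> ('x \<Rightarrow> bool \<Rightarrow> real) \<Rightarrow> real" where
  "Delta P Q = (\<Sum>x\<in>UNIV. \<Sum>y\<in>UNIV. \<bar>P x y - Q x y\<bar>)"

definition rate :: "nat \<Rightarrow> real \<Rightarrow> real" where
  "rate n \<beta> = sqrt (ln (real n / \<beta>) / real n)"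

end

theory Submission
  imports Defs
begin
lemma swap4: "(\<Sum>a\<in>A. \<Sum>b\<in>B. \<Sum>c\<in>C. \<Sum>e\<in>E. f a b c e) = (\<Sum>c\<in>C. \<Sum>e\<in>E. \<Sum>a\<in>A. \<Sum>b\<in>B. f a b c e)"
proof -
  have "(\<Sum>a\<in>A. \<Sum>b\<in>B. \<Sum>c\<in>C. \<Sum>e\<in>E. f a b c e) = (\<Sum>a\<in>A. \<Sum>c\<in>C. \<Sum>b\<in>B. \<Sum>e\<in>E. f a b c e)"
    by (rule sum.cong[OF refl], rule sum.swap)
  also have "\<dots> = (\<Sum>c\<in>C. \<Sum>a\<in>A. \<Sum>b\<in>B. \<Sum>e\<in>E. f a b c e)" by (rule sum.swap)
  also have "\<dots> = (\<Sum>c\<in>C. \<Sum>a\<in>A. \<Sum>e\<in>E. \<Sum>b\<in>B. f a b c e)"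
    by (rule sum.cong[OF refl], rule sum.cong[OF refl], rule sum.swap)
  also have "\<dots> = (\<Sum>c\<in>C. \<Sum>e\<in>E. \<Sum>a\<in>A. \<Sum>b\<in>B. f a b c e)"
    by (rule sum.cong[OF refl], rule sum.swap)
  finally show ?thesis .
qed

lemma sum_UNIV3: "(\<Sum>a\<in>(UNIV::('d::finite\<times>'x::finite\<times>bool) set). f a) = (\<Sum>d\<in>UNIV. \<Sum>x\<in>UNIV. \<Sum>y\<in>UNIV. f (d,x,y))"
  by (simp add: sum.cartesian_product UNIV_Times_UNIV[symmetric] del: UNIV_Times_UNIV)

lemma sum_pmf_pair: "(\<Sum>x'\<in>UNIV. \<Sum>y'\<in>UNIV. pmf (p::('x::finite\<times>bool) pmf) (x',y')) = 1"
proof -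
  have "(\<Sum>x'\<in>UNIV. \<Sum>y'\<in>UNIV. pmf p (x',y')) = (\<Sum>a\<in>UNIV. pmf p a)"
    by (simp add: sum.cartesian_product UNIV_Times_UNIV[symmetric] del: UNIV_Times_UNIV)
  also have "\<dots> = 1" by (rule sum_pmf_eq_1) auto
  finally show ?thesis .
qed

lemma marg_D_push: "marg_D (push P M) d = marg_D (P::'d::finite\<times>'x::finite\<times>bool\<Rightarrow>real) d"
proof -
  have "marg_D (push P M) d = (\<Sum>x'\<in>UNIV. \<Sum>y'\<in>UNIV. \<Sum>x\<in>UNIV. \<Sum>y\<in>UNIV. P (d, x, y) * pmf (M d x y) (x', y'))"
    by (simp add: marg_D_def push_def)
  also have "\<dots> = (\<Sum>x\<in>UNIV. \<Sum>y\<in>UNIV. P (d, x, y) * (\<Sum>x'\<in>UNIV. \<Sum>y'\<in>UNIV. pmf (M d x y) (x', y')))"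
    by (subst swap4) (simp add: sum_distrib_left)
  also have "\<dots> = marg_D P d" by (simp add: sum_pmf_pair marg_D_def)
  finally show ?thesis .
qed

lemma marg_D_YD: "marg_D P d = marg_YD P True d + marg_YD P False d"
  by (simp add: marg_D_def marg_YD_def UNIV_bool sum.distrib)

lemma push_diff:
  "(\<Sum>a\<in>UNIV. \<bar>push P M a - push Q M a\<bar>) \<le> (\<Sum>a\<in>UNIV. \<bar>(P::'d::finite\<times>'x::finite\<times>bool\<Rightarrow>real) a - Q a\<bar>)"
proof -
  have "(\<Sum>a\<in>UNIV. \<bar>push P M a - push Q M a\<bar>) =
     (\<Sum>d\<in>UNIV. \<Sum>x'\<in>UNIV. \<Sum>y'\<in>UNIV. \<bar>\<Sum>x\<in>UNIV. \<Sum>y\<in>UNIV. (P (d, x, y) - Q (d,x,y)) * pmf (M d x y) (x', y')\<bar>)"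
    by (simp add: sum_UNIV3 push_def sum_subtractf left_diff_distrib)
  also have "\<dots> \<le> (\<Sum>d\<in>UNIV. \<Sum>x'\<in>UNIV. \<Sum>y'\<in>UNIV. \<Sum>x\<in>UNIV. \<Sum>y\<in>UNIV. \<bar>P (d, x, y) - Q (d,x,y)\<bar> * pmf (M d x y) (x', y'))"
    apply (intro sum_mono)
    apply (rule order_trans[OF sum_abs]) apply (intro sum_mono)
    apply (rule order_trans[OF sum_abs]) apply (intro sum_mono)
    by (simp add: abs_mult)
  also have "\<dots> = (\<Sum>d\<in>UNIV. \<Sum>x\<in>UNIV. \<Sum>y\<in>UNIV. \<bar>P (d, x, y) - Q (d,x,y)\<bar> * (\<Sum>x'\<in>UNIV. \<Sum>y'\<in>UNIV. pmf (M d x y) (x', y')))"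
    by (rule sum.cong[OF refl], subst swap4) (simp add: sum_distrib_left)
  also have "\<dots> = (\<Sum>a\<in>UNIV. \<bar>P a - Q a\<bar>)" by (simp add: sum_pmf_pair sum_UNIV3)
  finally show ?thesis .
qed

lemma YD_diff: "\<bar>marg_YD P y d - marg_YD Q y d\<bar> \<le> (\<Sum>a\<in>UNIV. \<bar>(P::'d::finite\<times>'x::finite\<times>bool\<Rightarrow>real) a - Q a\<bar>)"
proof -
  have "\<bar>marg_YD P y d - marg_YD Q y d\<bar> \<le> (\<Sum>x\<in>UNIV. \<bar>P (d,x,y) - Q (d,x,y)\<bar>)"
    unfolding marg_YD_def sum_subtractf[symmetric] by (rule sum_abs)
  also have "\<dots> = (\<Sum>a\<in>(\<lambda>x. (d,x,y)) ` UNIV. \<bar>P a - Q a\<bar>)"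
    by (subst sum.reindex) (auto simp: inj_on_def)
  also have "\<dots> \<le> (\<Sum>a\<in>UNIV. \<bar>P a - Q a\<bar>)" by (rule sum_mono2) auto
  finally show ?thesis .
qed

lemma D_diff: "\<bar>marg_D P d - marg_D Q d\<bar> \<le> (\<Sum>a\<in>UNIV. \<bar>(P::'d::finite\<times>'x::finite\<times>bool\<Rightarrow>real) a - Q a\<bar>)"
proof -
  have "\<bar>marg_D P d - marg_D Q d\<bar> \<le> (\<Sum>x\<in>UNIV. \<Sum>y\<in>UNIV. \<bar>P (d,x,y) - Q (d,x,y)\<bar>)"
    unfolding marg_D_def sum_subtractf[symmetric]
    apply (rule order_trans[OF sum_abs]) apply (rule sum_mono)
    unfolding sum_subtractf[symmetric] by (rule sum_abs)
  also have "\<dots> = (\<Sum>a\<in>(\<lambda>(x,y). (d,x,y)) ` UNIV. \<bar>P a - Q a\<bar>)"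
    by (subst sum.reindex) (auto simp: inj_on_def sum.cartesian_product UNIV_Times_UNIV[symmetric] simp del: UNIV_Times_UNIV)
  also have "\<dots> \<le> (\<Sum>a\<in>UNIV. \<bar>P a - Q a\<bar>)" by (rule sum_mono2) auto
  finally show ?thesis .
qed

lemma Delta_marg_diff: "Delta (marg_XY P) (marg_XY Q) \<le> (\<Sum>a\<in>UNIV. \<bar>(P::'d::finite\<times>'x::finite\<times>bool\<Rightarrow>real) a - Q a\<bar>)"
proof -
  have "Delta (marg_XY P) (marg_XY Q) \<le> (\<Sum>x\<in>UNIV. \<Sum>y\<in>UNIV. \<Sum>d\<in>UNIV. \<bar>P (d,x,y) - Q (d,x,y)\<bar>)"
    unfolding Delta_def marg_XY_def sum_subtractf[symmetric]
    by (intro sum_mono sum_abs)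
  also have "\<dots> = (\<Sum>a\<in>UNIV. \<bar>P a - Q a\<bar>)"
    unfolding sum_UNIV3 apply (subst sum.swap) apply (subst (2) sum.swap) by (rule refl)
  finally show ?thesis .
qed

lemma Delta_tri: "Delta A C \<le> Delta A B + Delta B C"
  unfolding Delta_def sum.distrib[symmetric] by (intro sum_mono) linarith

lemma Delta_sym: "Delta A B = Delta B A"
  unfolding Delta_def by (simp add: abs_minus_commute)



lemma J_core:
  fixes a b A B \<pi> \<epsilon> \<delta> m E :: real
  assumes m: "m > 0" and ma: "m \<le> a" and ab: "a + m \<le> b" and b1: "b \<le> 1"
    and dA: "\<bar>A - a\<bar> \<le> \<delta>" and dB: "\<bar>B - b\<bar> \<le> \<delta>" and A0: "0 \<le> A" and AB: "A \<le> B"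
    and pi0: "0 \<le> \<pi>" and J: "\<bar>a / b / \<pi> - 1\<bar> \<le> \<epsilon>" and eE: "\<epsilon> \<le> E"
  shows "\<bar>A / B / \<pi> - 1\<bar> \<le> \<epsilon> + (2 * (1 + \<bar>E\<bar>) / m\<^sup>2 + ((1 + \<bar>E\<bar>) / m + 1) / m) * \<delta>"
proof -
  have d0: "\<delta> \<ge> 0" using dA by linarith
  have e0: "\<epsilon> \<ge> 0" using J by linarith
  have b0: "b > 0" using m ma ab by linarith
  have c0: "0 \<le> 2 * (1 + \<bar>E\<bar>) / m\<^sup>2" "0 \<le> ((1 + \<bar>E\<bar>) / m + 1) / m" using m by auto
  have k1: "0 \<le> 2 * (1 + \<bar>E\<bar>) / m\<^sup>2 * \<delta>" using c0 d0 by (intro mult_nonneg_nonneg)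
  have k2: "0 \<le> ((1 + \<bar>E\<bar>) / m + 1) / m * \<delta>" using c0 d0 by (intro mult_nonneg_nonneg)
  have split: "(2 * (1 + \<bar>E\<bar>) / m\<^sup>2 + ((1 + \<bar>E\<bar>) / m + 1) / m) * \<delta> =
     2 * (1 + \<bar>E\<bar>) / m\<^sup>2 * \<delta> + ((1 + \<bar>E\<bar>) / m + 1) / m * \<delta>"
    by (rule distrib_right)
  show ?thesis
  proof (cases "\<pi> = 0")
    case True
    then have "\<epsilon> \<ge> 1" using J by simp
    moreover have "\<bar>A / B / \<pi> - 1\<bar> = 1" using True by simp
    ultimately show ?thesis using k1 k2 split by linarith
  next
    case False
    then have pi: "\<pi> > 0" using pi0 by simp
    have "a / b / \<pi> \<le> 1 + \<epsilon>" using J by linarith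
    then have "a / b \<le> (1 + \<epsilon>) * \<pi>" using pi by (subst (asm) divide_le_eq) auto
    moreover have "a \<le> a / b" using b1 b0 ma m by (simp add: le_divide_eq mult_left_le)
    moreover have "(1 + \<epsilon>) * \<pi> \<le> (1 + \<bar>E\<bar>) * \<pi>" using eE pi by (intro mult_right_mono) auto
    ultimately have mE: "m \<le> (1 + \<bar>E\<bar>) * \<pi>" using ma by linarith
    have pil: "1 / \<pi> \<le> (1 + \<bar>E\<bar>) / m"
    proof -
      have "m * (1 / \<pi>) \<le> (1 + \<bar>E\<bar>) * \<pi> * (1 / \<pi>)" using mE pi by (intro mult_right_mono) auto
      also have "\<dots> = 1 + \<bar>E\<bar>" using pi by simp
      finally have "m * (1 / \<pi>) \<le> 1 + \<bar>E\<bar>" .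
      then show ?thesis using m by (simp add: le_divide_eq mult.commute)
    qed
    have tri: "\<bar>A / B / \<pi> - 1\<bar> \<le> \<bar>a / b / \<pi> - 1\<bar> + \<bar>A / B - a / b\<bar> * (1 / \<pi>)"
    proof -
      have gen: "u / \<pi> - 1 = (v / \<pi> - 1) + (u - v) * (1 / \<pi>)" for u v :: real
        by (simp add: diff_divide_distrib)
      have "\<bar>A / B / \<pi> - 1\<bar> = \<bar>(a / b / \<pi> - 1) + (A / B - a / b) * (1 / \<pi>)\<bar>"
        by (subst gen[of "A/B" "a/b"]) (rule refl)
      also have "\<dots> \<le> \<bar>a / b / \<pi> - 1\<bar> + \<bar>(A / B - a / b) * (1 / \<pi>)\<bar>" by (rule abs_triangle_ineq)
      also have "\<bar>(A / B - a / b) * (1 / \<pi>)\<bar> = \<bar>A / B - a / b\<bar> * (1 / \<pi>)" using pi by (simp add: abs_mult)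
      finally show ?thesis .
    qed
    show ?thesis
    proof (cases "\<delta> \<le> m")
      case True
      have Bm: "B \<ge> m" using dB ab ma True by linarith
      have "A / B - a / b = ((A - a) * b - a * (B - b)) / (B * b)"
        using Bm b0 m by (simp add: field_simps)
      then have "\<bar>A / B - a / b\<bar> = \<bar>(A - a) * b - a * (B - b)\<bar> / (B * b)"
        using Bm b0 m by (simp add: abs_divide)
      also have "\<dots> \<le> (\<delta> * b + b * \<delta>) / (B * b)"
      proof (rule divide_right_mono)
        have "\<bar>(A - a) * b\<bar> \<le> \<delta> * b" using dA b0 by (simp add: abs_mult mult_right_mono)
        moreover have "\<bar>a * (B - b)\<bar> \<le> b * \<delta>" using dB ma ab m
          by (simp add: abs_mult mult_mono)
        ultimately show "\<bar>(A - a) * b - a * (B - b)\<bar> \<le> \<delta> * b + b * \<delta>" by linarith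
        show "0 \<le> B * b" using Bm b0 m by simp
      qed
      also have "\<dots> = 2 * \<delta> / B" using b0 Bm m by (simp add: field_simps)
      also have "\<dots> \<le> 2 * \<delta> / m" using Bm m d0 by (simp add: frac_le)
      finally have q: "\<bar>A / B - a / b\<bar> \<le> 2 * \<delta> / m" .
      have "\<bar>A / B - a / b\<bar> * (1 / \<pi>) \<le> (2 * \<delta> / m) * ((1 + \<bar>E\<bar>) / m)"
        using q pil pi by (intro mult_mono) auto
      also have "\<dots> = 2 * (1 + \<bar>E\<bar>) / m\<^sup>2 * \<delta>" by (simp add: power2_eq_square)
      finally have "\<bar>A / B - a / b\<bar> * (1 / \<pi>) \<le> 2 * (1 + \<bar>E\<bar>) / m\<^sup>2 * \<delta>" .
      then show ?thesis using tri J k2 split by linarith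
    next
      case False
      have ABle: "A / B \<le> 1" using AB A0 by (cases "B = 0") (auto simp: divide_le_eq)
      have AB0: "A / B \<ge> 0" using AB A0 by simp
      have "A / B / \<pi> \<ge> 0" using AB0 pi by (rule divide_nonneg_pos[of "A/B"])
      then have s1: "\<bar>A / B / \<pi> - 1\<bar> \<le> A / B / \<pi> + 1" by linarith
      have s2: "A / B / \<pi> \<le> 1 / \<pi>" by (rule divide_right_mono[OF ABle]) (use pi in simp)
      have s3: "(1 + \<bar>E\<bar>) / m + 1 \<le> ((1 + \<bar>E\<bar>) / m + 1) / m * \<delta>"
      proof -
        have "1 \<le> \<delta> / m" using False m by (simp add: le_divide_eq)
        moreover have "0 \<le> (1 + \<bar>E\<bar>) / m + 1" using m by simp
        ultimately have "(1 + \<bar>E\<bar>) / m + 1 \<le> ((1 + \<bar>E\<bar>) / m + 1) * (\<delta> / m)"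
          by (metis mult_left_mono mult.right_neutral)
        then show ?thesis by simp
      qed
      show ?thesis using s1 s2 s3 pil k1 e0 split by linarith
    qed
  qed
qed


lemma bern: "map_pmf (\<lambda>x. x = a) q = bernoulli_pmf (pmf q a)"
proof (rule pmf_eqI)
  fix b :: bool
  have q01: "0 \<le> pmf q a" "pmf q a \<le> 1" by (auto simp: pmf_le_1)
  show "pmf (map_pmf (\<lambda>x. x = a) q) b = pmf (bernoulli_pmf (pmf q a)) b"
  proof (cases b)
    case True
    then show ?thesis using q01 by (simp add: pmf_map vimage_def measure_pmf_single)
  next
    case False
    have "measure_pmf.prob q (UNIV - {a}) = 1 - measure_pmf.prob q {a}"
      using measure_pmf.prob_compl[of "{a}" q] by simp
    moreover have "{x. x \<noteq> a} = UNIV - {a}" by auto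
    ultimately show ?thesis using q01 False by (simp add: pmf_map vimage_def measure_pmf_single)
  qed
qed

lemma binom: "map_pmf (\<lambda>s. card {i\<in>{..<n}. s i = a}) (sample_pmf n q) = binomial_pmf n (pmf q a)"
proof -
  have p: "pmf q a \<in> {0..1}" by (auto simp: pmf_le_1)
  have "binomial_pmf n (pmf q a) = map_pmf (\<lambda>f. card {x\<in>{..<n}. f x}) (Pi_pmf {..<n} (undefined = a) (\<lambda>_. bernoulli_pmf (pmf q a)))"
    by (rule binomial_pmf_altdef') (use p in auto)
  also have "Pi_pmf {..<n} (undefined = a) (\<lambda>_. bernoulli_pmf (pmf q a)) = Pi_pmf {..<n} (undefined = a) (\<lambda>_. map_pmf (\<lambda>x. x = a) q)"
    by (simp add: bern)
  also have "\<dots> = map_pmf (\<lambda>h. (\<lambda>x. x = a) \<circ> h) (Pi_pmf {..<n} undefined (\<lambda>_. q))"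
    by (rule Pi_pmf_map) auto
  finally show ?thesis by (simp add: sample_pmf_def pmf.map_comp o_def)
qed

lemma hoeff:
  assumes n: "n > 0" and t: "t \<ge> 0"
  shows "measure_pmf.prob (sample_pmf n q) {s. \<bar>emp_dist n s a - pmf q a\<bar> \<ge> t} \<le> 2 * exp (-2 * real n * t\<^sup>2)"
proof -
  interpret binomial_distribution n "pmf q a" by unfold_locales (auto simp: pmf_le_1)
  have "{s. \<bar>emp_dist n s a - pmf q a\<bar> \<ge> t} = (\<lambda>s. card {i\<in>{..<n}. s i = a}) -` {x. \<bar>real x / n - pmf q a\<bar> \<ge> t}"
    by (auto simp: emp_dist_def)
  then have "measure_pmf.prob (sample_pmf n q) {s. \<bar>emp_dist n s a - pmf q a\<bar> \<ge> t} =
     measure_pmf.prob (binomial_pmf n (pmf q a)) {x. \<bar>real x / n - pmf q a\<bar> \<ge> t}"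
    by (simp add: binom[symmetric] measure_map_pmf)
  also have "\<dots> \<le> 2 * exp (-2 * real n * t\<^sup>2)" using prob_abs_ge'[OF n t] by simp
  finally show ?thesis .
qed



lemma emp_sum:
  assumes "n > 0"
  shows "(\<Sum>a\<in>UNIV. emp_dist n s (a::'a::finite)) = 1"
proof -
  have "(\<Sum>a\<in>UNIV. card {i\<in>{..<n}. s i = a}) = card (\<Union>a\<in>UNIV. {i\<in>{..<n}. s i = a})"
    by (rule card_UN_disjoint[symmetric]) auto
  also have "(\<Union>a\<in>UNIV. {i\<in>{..<n}. s i = a}) = {..<n}" by auto
  finally have "(\<Sum>a\<in>UNIV. real (card {i\<in>{..<n}. s i = a})) = real n"
    by (metis card_lessThan of_nat_sum)
  then show ?thesis using assms by (simp add: emp_dist_def sum_divide_distrib[symmetric])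
qed

lemma emp_nonneg: "0 \<le> emp_dist n s a" by (simp add: emp_dist_def)

lemma push_nonneg:
  assumes "\<And>b. 0 \<le> P b" shows "0 \<le> push P M a"
proof -
  obtain d x y where "a = (d, x, y)" by (cases a) auto
  then show ?thesis using assms by (simp add: push_def sum_nonneg)
qed

lemma YD_nonneg: "(\<And>a. 0 \<le> P a) \<Longrightarrow> 0 \<le> marg_YD P y d"
  by (auto simp: marg_YD_def intro!: sum_nonneg)

lemma marg_D_le_total:
  assumes "\<And>a. 0 \<le> P a"
  shows "marg_D (P::'d::finite\<times>'x::finite\<times>bool\<Rightarrow>real) d \<le> (\<Sum>a\<in>UNIV. P a)"
proof -
  have "marg_D P d = (\<Sum>a\<in>(\<lambda>(x,y). (d,x,y)) ` UNIV. P a)"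
    unfolding marg_D_def
    by (subst sum.reindex) (auto simp: inj_on_def sum.cartesian_product UNIV_Times_UNIV[symmetric] simp del: UNIV_Times_UNIV)
  also have "\<dots> \<le> (\<Sum>a\<in>UNIV. P a)" by (rule sum_mono2) (auto simp: assms)
  finally show ?thesis .
qed

lemma YD_le_D:
  assumes "\<And>a. 0 \<le> P a"
  shows "marg_YD P y d \<le> marg_D P d" "marg_YD P y d + marg_YD P (\<not> y) d = marg_D P d"
proof -
  show "marg_YD P y d + marg_YD P (\<not> y) d = marg_D P d"
    by (cases y) (simp_all only: marg_D_YD, simp_all)
  then show "marg_YD P y d \<le> marg_D P d"
    using YD_nonneg[where P=P, OF assms, where y="\<not>y" and d=d] by linarith
qed

definition Dc :: "real \<Rightarrow> real \<Rightarrow> real" where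
  "Dc m E = 2 * (1 + \<bar>E\<bar>) / m\<^sup>2 + ((1 + \<bar>E\<bar>) / m + 1) / m + 2"

lemma det:
  fixes p q :: "'d::finite\<times>'x::finite\<times>bool \<Rightarrow> real" and \<pi> :: "bool \<Rightarrow> real"
  assumes p0: "\<And>a. 0 \<le> p a" and q0: "\<And>a. 0 \<le> q a" and ps: "(\<Sum>a\<in>UNIV. p a) = 1"
    and m: "m > 0" and pi0: "\<And>y. 0 \<le> \<pi> y" and eE: "\<epsilon> \<le> E"
    and hJ: "\<forall>y d. J (cond_Y_D (push p M) y d) (\<pi> y) \<le> \<epsilon>"
    and hD: "Delta (marg_XY p) (marg_XY (push p M)) \<le> \<mu>"
    and hm: "\<forall>d y. marg_YD (push p M) y d \<ge> m"
    and dl: "(\<Sum>a\<in>UNIV. \<bar>q a - p a\<bar>) \<le> \<delta>"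
  shows "(\<forall>y d. J (cond_Y_D (push q M) y d) (\<pi> y) \<le> \<epsilon> + Dc m E * \<delta>)
     \<and> Delta (marg_XY q) (marg_XY (push q M)) \<le> \<mu> + Dc m E * \<delta>"
proof -
  have ph0: "\<And>a. 0 \<le> push p M a" by (rule push_nonneg[where P=p, OF p0])
  have qh0: "\<And>a. 0 \<le> push q M a" by (rule push_nonneg[where P=q, OF q0])
  have "0 \<le> (\<Sum>a\<in>UNIV. \<bar>q a - p a\<bar>)" by (rule sum_nonneg) simp
  then have d0: "0 \<le> \<delta>" using dl by linarith
  have pq: "(\<Sum>a\<in>UNIV. \<bar>push q M a - push p M a\<bar>) \<le> \<delta>" using push_diff[of q M p] dl by linarith
  have Dc0: "0 \<le> 2 * (1 + \<bar>E\<bar>) / m\<^sup>2 + ((1 + \<bar>E\<bar>) / m + 1) / m" using m by simp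
  have J1: "J (cond_Y_D (push q M) y d) (\<pi> y) \<le> \<epsilon> + Dc m E * \<delta>" for y d
  proof -
    have "J (cond_Y_D (push q M) y d) (\<pi> y) \<le> \<epsilon> + (2 * (1 + \<bar>E\<bar>) / m\<^sup>2 + ((1 + \<bar>E\<bar>) / m + 1) / m) * \<delta>"
      unfolding J_def cond_Y_D_def
    proof (rule J_core[OF m _ _ _ _ _ YD_nonneg[where P="push q M", OF qh0] YD_le_D(1)[where P="push q M", OF qh0] pi0 _ eE])
      show "m \<le> marg_YD (push p M) y d" using hm by auto
      show "marg_YD (push p M) y d + m \<le> marg_D (push p M) d"
        using hm YD_le_D(2)[where P="push p M", OF ph0, where y=y and d=d] by (smt (verit))
      show "marg_D (push p M) d \<le> 1" using marg_D_le_total[where P=p, OF p0, of d] ps by (simp add: marg_D_push)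
      show "\<bar>marg_YD (push q M) y d - marg_YD (push p M) y d\<bar> \<le> \<delta>"
        using YD_diff[of "push q M" y d "push p M"] pq by linarith
      show "\<bar>marg_D (push q M) d - marg_D (push p M) d\<bar> \<le> \<delta>"
        using D_diff[of q d p] dl by (simp add: marg_D_push)
      show "\<bar>marg_YD (push p M) y d / marg_D (push p M) d / \<pi> y - 1\<bar> \<le> \<epsilon>"
        using hJ by (simp add: J_def cond_Y_D_def)
    qed
    also have "\<dots> \<le> \<epsilon> + Dc m E * \<delta>" unfolding Dc_def using d0 by (simp add: distrib_right)
    finally show ?thesis .
  qed
  have "Delta (marg_XY q) (marg_XY (push q M)) \<le>
     Delta (marg_XY q) (marg_XY p) + (Delta (marg_XY p) (marg_XY (push p M)) + Delta (marg_XY (push p M)) (marg_XY (push q M)))"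
    using Delta_tri[of "marg_XY q" "marg_XY (push q M)" "marg_XY p"]
      Delta_tri[of "marg_XY p" "marg_XY (push q M)" "marg_XY (push p M)"] by linarith
  also have "\<dots> \<le> \<delta> + (\<mu> + \<delta>)"
  proof -
    have "Delta (marg_XY q) (marg_XY p) \<le> \<delta>" using Delta_marg_diff[of q p] dl by linarith
    moreover have "Delta (marg_XY (push p M)) (marg_XY (push q M)) \<le> \<delta>"
      using Delta_marg_diff[of "push q M" "push p M"] pq
        Delta_sym[of "marg_XY (push p M)" "marg_XY (push q M)"] by linarith
    ultimately show ?thesis using hD by linarith
  qed
  also have "\<dots> \<le> \<mu> + Dc m E * \<delta>"
  proof -
    have "0 \<le> (2 * (1 + \<bar>E\<bar>) / m\<^sup>2 + ((1 + \<bar>E\<bar>) / m + 1) / m) * \<delta>" using Dc0 d0 by simp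
    then show ?thesis unfolding Dc_def by (simp add: distrib_right)
  qed
  finally show ?thesis using J1 by blast
qed



lemma arith_bound:
  fixes K n :: nat and \<beta> :: real
  assumes n: "n \<ge> 2" and b: "0 < \<beta>" "\<beta> < 1"
  shows "2 * real K * exp (-2 * real n * (sqrt ((1 + 2 * real K) / 2) * rate n \<beta>)\<^sup>2) \<le> \<beta>"
proof -
  define L where "L = ln (real n / \<beta>)"
  have nb: "real n / \<beta> > 1" using n b by (simp add: less_divide_eq)
  then have L0: "L > 0" unfolding L_def by simp
  have "(sqrt ((1 + 2 * real K) / 2) * rate n \<beta>)\<^sup>2 = (1 + 2 * real K) / 2 * (L / real n)"
    using L0 n unfolding rate_def L_def by (simp add: power_mult_distrib)
  then have "-2 * real n * (sqrt ((1 + 2 * real K) / 2) * rate n \<beta>)\<^sup>2 = - L + real (2 * K) * (- L)"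
    using n by (simp add: field_simps)
  then have "exp (-2 * real n * (sqrt ((1 + 2 * real K) / 2) * rate n \<beta>)\<^sup>2) = exp (- L + real (2 * K) * (- L))"
    by (rule arg_cong)
  also have "\<dots> = exp (- L) * exp (- L) ^ (2 * K)"
    by (simp only: exp_add exp_of_nat_mult)
  also have eL: "exp (- L) = \<beta> / real n" unfolding L_def using nb b by (simp add: exp_minus)
  finally have e1: "exp (-2 * real n * (sqrt ((1 + 2 * real K) / 2) * rate n \<beta>)\<^sup>2) = \<beta> / real n * (\<beta> / real n) ^ (2 * K)" .
  have "(\<beta> / real n) ^ (2 * K) \<le> (1 / 2) ^ (2 * K)"
  proof (rule power_mono)
    show "\<beta> / real n \<le> 1 / 2" using n b by (simp add: divide_simps)
    show "0 \<le> \<beta> / real n" using b by simp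
  qed
  then have e: "exp (-2 * real n * (sqrt ((1 + 2 * real K) / 2) * rate n \<beta>)\<^sup>2) \<le> \<beta> / real n * (1 / 2) ^ (2 * K)"
    unfolding e1 using b by (intro mult_left_mono) auto
  have "2 * real K * exp (-2 * real n * (sqrt ((1 + 2 * real K) / 2) * rate n \<beta>)\<^sup>2)
      \<le> 2 * real K * (\<beta> / real n * (1 / 2) ^ (2 * K))"
    using e by (intro mult_left_mono) auto
  also have "\<dots> \<le> 2 * real K * (\<beta> * (1 / 2) ^ (2 * K))"
    using n b by (intro mult_left_mono mult_right_mono) (auto simp: divide_simps)
  also have "\<dots> = \<beta> * (real (2 * K) / 2 ^ (2 * K))" by (simp add: field_simps)
  also have "\<dots> \<le> \<beta> * 1"
  proof (rule mult_left_mono)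
    have "2 * K < 2 ^ (2 * K)" by (rule less_exp)
    then have "real (2 * K) \<le> real (2 ^ (2 * K))" by linarith
    then show "real (2 * K) / 2 ^ (2 * K) \<le> 1" by (simp add: divide_simps)
  qed (use b in simp)
  finally show ?thesis by simp
qed

lemma n1_false:
  fixes s :: "nat \<Rightarrow> 'd::finite \<times> 'x::finite \<times> bool"
  shows "\<not> (\<forall>y (d::'d). marg_YD (emp_dist (Suc 0) s) y d > 0)"
proof
  assume H: "\<forall>y d. marg_YD (emp_dist (Suc 0) s) y d > 0"
  obtain d0 x0 y0 where s0: "s 0 = (d0, x0, y0)" by (cases "s 0") auto
  have "marg_YD (emp_dist (Suc 0) s) (\<not> y0) d0 = 0"
    unfolding marg_YD_def
  proof (rule sum.neutral, rule ballI)
    fix x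
    have "{i \<in> {..<Suc 0}. s i = (d0, x, \<not> y0)} = {}" using s0 by auto
    then show "emp_dist (Suc 0) s (d0, x, \<not> y0) = 0" by (simp add: emp_dist_def)
  qed
  with H show False by (metis less_irrefl)
qed



theorem proposition3:
  fixes m E :: real
  assumes "m > 0"
  shows "\<exists>C>0. \<forall>(q :: ('d::finite \<times> 'x::finite \<times> bool) pmf)
      (Map :: ('d \<times> 'x \<times> bool \<Rightarrow> real) \<Rightarrow> 'd \<Rightarrow> 'x \<Rightarrow> bool \<Rightarrow> ('x \<times> bool) pmf)
      (pT :: bool pmf) (n :: nat) (\<beta> :: real) (\<epsilon> :: real) (\<mu> :: real).
      n \<ge> 1 \<longrightarrow> 0 < \<beta> \<longrightarrow> \<beta> < 1 \<longrightarrow> \<epsilon> \<le> E \<longrightarrow>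
      measure_pmf.prob (sample_pmf n q)
        {s. let p = emp_dist n s; M = Map p; ph = push p M; qh = push (pmf q) M in
          ((\<forall>y d. marg_YD p y d > 0 \<and> J (cond_Y_D ph y d) (pmf pT y) \<le> \<epsilon>)
           \<and> Delta (marg_XY p) (marg_XY ph) \<le> \<mu>
           \<and> (\<forall>d y. marg_YD ph y d \<ge> m))
          \<longrightarrow> ((\<forall>y d. J (cond_Y_D qh y d) (pmf pT y) \<le> \<epsilon> + C * rate n \<beta>)
               \<and> Delta (marg_XY (pmf q)) (marg_XY qh) \<le> \<mu> + C * rate n \<beta>)}
      \<ge> 1 - \<beta>"
proof -
  define K where "K = CARD('d \<times> 'x \<times> bool)"
  define c where "c = sqrt ((1 + 2 * real K) / 2)"
  define C where "C = c * real K * Dc m E"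
  have K0: "K > 0" unfolding K_def by simp
  have c0: "c > 0" unfolding c_def by simp
  have Dc0: "Dc m E > 0" unfolding Dc_def using assms by (simp add: add_nonneg_pos)
  have C0: "C > 0" unfolding C_def using K0 c0 Dc0 by simp
  show ?thesis
  proof (intro exI[of _ C] conjI allI impI C0)
    fix q :: "('d \<times> 'x \<times> bool) pmf"
      and Map :: "('d \<times> 'x \<times> bool \<Rightarrow> real) \<Rightarrow> 'd \<Rightarrow> 'x \<Rightarrow> bool \<Rightarrow> ('x \<times> bool) pmf"
      and pT :: "bool pmf" and n :: nat and \<beta> \<epsilon> \<mu> :: real
    assume n1: "n \<ge> 1" and b0: "0 < \<beta>" and b1: "\<beta> < 1" and eE: "\<epsilon> \<le> E"
    define S where "S = {s. let p = emp_dist n s; M = Map p; ph = push p M; qh = push (pmf q) M in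
          ((\<forall>y d. marg_YD p y d > 0 \<and> J (cond_Y_D ph y d) (pmf pT y) \<le> \<epsilon>)
           \<and> Delta (marg_XY p) (marg_XY ph) \<le> \<mu>
           \<and> (\<forall>d y. marg_YD ph y d \<ge> m))
          \<longrightarrow> ((\<forall>y d. J (cond_Y_D qh y d) (pmf pT y) \<le> \<epsilon> + C * rate n \<beta>)
               \<and> Delta (marg_XY (pmf q)) (marg_XY qh) \<le> \<mu> + C * rate n \<beta>)}"
    define t where "t = c * rate n \<beta>"
    define G where "G = {s. \<forall>a. \<bar>emp_dist n s a - pmf q a\<bar> < t}"
    have GS: "G \<subseteq> S"
    proof
      fix s assume sG: "s \<in> G"
      define p where "p = emp_dist n s"
      have dl: "(\<Sum>a\<in>UNIV. \<bar>pmf q a - p a\<bar>) \<le> real K * t"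
      proof -
        have "(\<Sum>a\<in>UNIV. \<bar>pmf q a - p a\<bar>) \<le> (\<Sum>a\<in>(UNIV::('d \<times> 'x \<times> bool) set). t)"
          using sG by (intro sum_mono) (auto simp: G_def p_def abs_minus_commute less_imp_le)
        then show ?thesis by (simp add: K_def)
      qed
      have eq: "Dc m E * (real K * t) = C * rate n \<beta>" unfolding C_def t_def by simp
      have R: "((\<forall>y d. 0 < marg_YD p y d \<and> J (cond_Y_D (push p (Map p)) y d) (pmf pT y) \<le> \<epsilon>) \<and>
          Delta (marg_XY p) (marg_XY (push p (Map p))) \<le> \<mu> \<and> (\<forall>d y. m \<le> marg_YD (push p (Map p)) y d)) \<longrightarrow>
          ((\<forall>y d. J (cond_Y_D (push (pmf q) (Map p)) y d) (pmf pT y) \<le> \<epsilon> + C * rate n \<beta>) \<and>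
          Delta (marg_XY (pmf q)) (marg_XY (push (pmf q) (Map p))) \<le> \<mu> + C * rate n \<beta>)"
      proof (intro impI)
        assume H: "(\<forall>y d. 0 < marg_YD p y d \<and> J (cond_Y_D (push p (Map p)) y d) (pmf pT y) \<le> \<epsilon>) \<and>
          Delta (marg_XY p) (marg_XY (push p (Map p))) \<le> \<mu> \<and> (\<forall>d y. m \<le> marg_YD (push p (Map p)) y d)"
        have "(\<forall>y d. J (cond_Y_D (push (pmf q) (Map p)) y d) (pmf pT y) \<le> \<epsilon> + Dc m E * (real K * t))
          \<and> Delta (marg_XY (pmf q)) (marg_XY (push (pmf q) (Map p))) \<le> \<mu> + Dc m E * (real K * t)"
        proof (rule det[where p=p and q="pmf q" and M="Map p" and \<pi>="pmf pT"])
          show "\<And>a. 0 \<le> p a" unfolding p_def by (rule emp_nonneg)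
          show "\<And>a. 0 \<le> pmf q a" by simp
          show "(\<Sum>a\<in>UNIV. p a) = 1" unfolding p_def using n1 by (intro emp_sum) simp
        qed (use assms eE H dl in auto)
        then show "(\<forall>y d. J (cond_Y_D (push (pmf q) (Map p)) y d) (pmf pT y) \<le> \<epsilon> + C * rate n \<beta>) \<and>
          Delta (marg_XY (pmf q)) (marg_XY (push (pmf q) (Map p))) \<le> \<mu> + C * rate n \<beta>"
          unfolding eq .
      qed
      then show "s \<in> S" unfolding S_def Let_def p_def by simp
    qed
    show "1 - \<beta> \<le> measure_pmf.prob (sample_pmf n q) S"
    proof (cases "n = 1")
      case True
      have "S = UNIV"
        unfolding S_def Let_def using n1_false True by auto
      then show ?thesis using b0 by simp
    next
      case False
      then have n2: "n \<ge> 2" using n1 by simp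
      have "UNIV - G = (\<Union>a\<in>UNIV. {s. t \<le> \<bar>emp_dist n s a - pmf q a\<bar>})"
        unfolding G_def by (auto simp: not_less) (meson not_le)
      then have "measure_pmf.prob (sample_pmf n q) (UNIV - G)
          \<le> (\<Sum>a\<in>UNIV. measure_pmf.prob (sample_pmf n q) {s. t \<le> \<bar>emp_dist n s a - pmf q a\<bar>})"
        by (simp add: measure_pmf.finite_measure_subadditive_finite)
      also have "\<dots> \<le> (\<Sum>a\<in>(UNIV::('d \<times> 'x \<times> bool) set). 2 * exp (-2 * real n * t\<^sup>2))"
      proof (rule sum_mono, rule hoeff)
        show "0 < n" using n1 by simp
        have "1 < real n / \<beta>" using n2 b0 b1 by (simp add: less_divide_eq)
        then have "0 \<le> ln (real n / \<beta>) / real n" by simp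
        then show "0 \<le> t" unfolding t_def rate_def using c0 by simp
      qed
      also have "\<dots> = 2 * real K * exp (-2 * real n * t\<^sup>2)" by (simp add: K_def)
      also have "\<dots> \<le> \<beta>" unfolding t_def c_def by (rule arith_bound[OF n2 b0 b1])
      finally have bad: "measure_pmf.prob (sample_pmf n q) (UNIV - G) \<le> \<beta>" .
      have "measure_pmf.prob (sample_pmf n q) (UNIV - G) = 1 - measure_pmf.prob (sample_pmf n q) G"
        using measure_pmf.prob_compl[of G "sample_pmf n q"] by simp
      moreover have "measure_pmf.prob (sample_pmf n q) G \<le> measure_pmf.prob (sample_pmf n q) S"
        using GS by (simp add: measure_pmf.finite_measure_mono)
      ultimately show ?thesis using bad by linarith
    qed
  qed
qed


end
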